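(* Let $(\mathbf x_i,\mathbf v_i,\theta_i)$ be a sectorial solution of system (CSF) (any $\kappa\ge0$). Let $\gamma(t)=\max_{i,j}\gamma_{ij}(t)$, where $\gamma_{ij}(t)\in[0,\pi]$ is the angle between $\mathbf v_i(t)$ and $\mathbf v_j(t)$ (well defined since the velocities do not vanish), and let $\mathcal D(t)=\max_{i,j}|\mathbf x_i(t)-\mathbf x_j(t)|$. Then there exist constants $C,c>0$, depending on the initial data and the parameters, such that for all $t\ge0$ $$1-\cos\gamma(t)\le C\exp\Big(-cM\int_0^t\phi(\mathcal D(s))\,ds\Big).$$
   Context: Fix integers $N\ge1$, $n\ge1$, masses $m_1,\dots,m_N>0$ with $M=\sum_i m_i$, parameters $\sigma>0$, $p>0$, $\kappa\ge0$, and a communication kernel $\phi:[0,\infty)\to(0,\infty)$ that is smooth, positive and non-increasing. Write $\phi_{ij}=\phi(|\mathbf x_i-\mathbf x_j|)$, with $|\cdot|$ the Euclidean norm on $\mathbb R^n$. System (CSF) is, for $i=1,\dots,N$, $$\dot{\mathbf x}_i=\mathbf v_i,\qquad \dot{\mathbf v}_i=\sum_{j=1}^N m_j\phi_{ij}(\mathbf v_j-\mathbf v_i)+\sigma(\theta_i-|\mathbf v_i|^p)\mathbf v_i,\qquad \dot\theta_i=\kappa\sum_{j=1}^N m_j\phi_{ij}(\theta_j-\theta_i),$$ with $\mathbf x_i,\mathbf v_i\in\mathbb R^n$ and initial values $\theta_i(0)>0$; solutions are considered for $t\ge0$. A solution is called sectorial if there exists a unit vector $\mathbf e\in\mathbb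 R^n$ with $\mathbf e\cdot\mathbf v_i(0)>0$ for all $i=1,\dots,N$. *)

theory Defs
  imports "HOL-Analysis.Analysis"
begin

definition vec_angle :: "'a::euclidean_space \<Rightarrow> 'a \<Rightarrow> real" where
  "vec_angle u w = arccos (inner u w / (norm u * norm w))"

definition max_angle :: "nat \<Rightarrow> (nat \<Rightarrow> real \<Rightarrow> 'a::euclidean_space) \<Rightarrow> real \<Rightarrow> real" where
  "max_angle N v t = Max {vec_angle (v i t) (v j t) | i j. i < N \<and> j < N}"

definition diam :: "nat \<Rightarrow> (nat \<Rightarrow> real \<Rightarrow> 'a::euclidean_space) \<Rightarrow> real \<Rightarrow> real" where
  "diam N x t = Max {norm (x i t - x j t) | i j. i < N \<and> j < N}"

definition CSF_solution ::
  "nat \<Rightarrow> (nat \<Rightarrow> real) \<Rightarrow> real \<Rightarrow> real \<Rightarrow> real \<Rightarrow> (real \<Rightarrow> real) \<Rightarrow>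
   (nat \<Rightarrow> real \<Rightarrow> 'a::euclidean_space) \<Rightarrow> (nat \<Rightarrow> real \<Rightarrow> 'a) \<Rightarrow> (nat \<Rightarrow> real \<Rightarrow> real) \<Rightarrow> bool" where
  "CSF_solution N m \<sigma> p \<kappa> \<phi> x v \<theta> \<longleftrightarrow>
     (\<forall>i<N. \<forall>t\<ge>0.
        (x i has_vector_derivative v i t) (at t within {0..}) \<and>
        (v i has_vector_derivative
            ((\<Sum>j<N. (m j * \<phi> (norm (x i t - x j t))) *\<^sub>R (v j t - v i t))
             + (\<sigma> * (\<theta> i t - norm (v i t) powr p)) *\<^sub>R v i t)) (at t within {0..}) \<and>
        (\<theta> i has_real_derivative
            (\<kappa> * (\<Sum>j<N. m j * \<phi> (norm (x i t - x j t)) * (\<theta> j t - \<theta> i t)))) (at t within {0..}))"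

definition sectorial :: "nat \<Rightarrow> (nat \<Rightarrow> real \<Rightarrow> 'a::euclidean_space) \<Rightarrow> bool" where
  "sectorial N v \<longleftrightarrow> (\<exists>e. norm e = 1 \<and> (\<forall>i<N. inner e (v i 0) > 0))"

end

theory Submission
  imports Defs
begin

lemma barrier:
  fixes F F' :: "'k \<Rightarrow> real \<Rightarrow> real"
  assumes fin: "finite K"
  and cont: "\<And>k. k\<in>K \<Longrightarrow> continuous_on {0..T} (F k)"
  and der: "\<And>k t. k\<in>K \<Longrightarrow> 0<t \<Longrightarrow> t<T \<Longrightarrow> (F k has_real_derivative F' k t) (at t within {0..})"
  and init: "\<And>k. k\<in>K \<Longrightarrow> F k 0 < 0"
  and touch: "\<And>k t. k\<in>K \<Longrightarrow> 0<t \<Longrightarrow> t<T \<Longrightarrow> (\<forall>j\<in>K. F j t \<le> 0) \<Longrightarrow> F k t = 0 \<Longrightarrow> F' k t < 0"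
  and k0: "k0\<in>K" and t0: "0\<le>t0" "t0<T"
  shows "F k0 t0 < 0"
proof (rule ccontr)
  assume "\<not> F k0 t0 < 0"
  define S where "S = {t. 0 \<le> t \<and> t \<le> t0 \<and> (\<exists>k\<in>K. 0 \<le> F k t)}"
  have t0S: "t0 \<in> S" using \<open>\<not> F k0 t0 < 0\<close> k0 t0 unfolding S_def by (intro CollectI conjI bexI[of _ k0]) auto
  have bdd: "bdd_below S" unfolding S_def by (rule bdd_belowI[of _ 0]) auto
  define s where "s = Inf S"
  have s0: "0 \<le> s" unfolding s_def using t0S by (intro cInf_greatest) (auto simp: S_def)
  have st0: "s \<le> t0" unfolding s_def using t0S bdd by (rule cInf_lower)
  have A: "F j r < 0" if "j\<in>K" "0 \<le> r" "r < s" for j r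
  proof (rule ccontr)
    assume "\<not> F j r < 0"
    then have "r \<in> S" using that st0 unfolding S_def by (intro CollectI conjI bexI[of _ j]) auto
    then have "s \<le> r" unfolding s_def using bdd by (rule cInf_lower)
    then show False using that by simp
  qed
  have D: "\<exists>k\<in>K. 0 \<le> F k s"
  proof (rule ccontr)
    assume "\<not> (\<exists>k\<in>K. 0 \<le> F k s)"
    then have neg: "\<forall>k\<in>K. F k s < 0" by auto
    have "\<forall>k\<in>K. eventually (\<lambda>r. F k r < 0) (at s within {0..T})"
    proof
      fix k assume "k\<in>K"
      have "continuous (at s within {0..T}) (F k)"
        using cont[OF \<open>k\<in>K\<close>] s0 st0 t0 by (auto simp: continuous_on_eq_continuous_within)
      then have "(F k \<longlongrightarrow> F k s) (at s within {0..T})" by (simp add: continuous_within)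
      then show "eventually (\<lambda>r. F k r < 0) (at s within {0..T})"
        using neg \<open>k\<in>K\<close> by (auto intro: order_tendstoD)
    qed
    then have "eventually (\<lambda>r. \<forall>k\<in>K. F k r < 0) (at s within {0..T})"
      using fin by (simp add: eventually_ball_finite)
    then obtain d where d: "d>0" "\<And>r. r\<in>{0..T} \<Longrightarrow> r \<noteq> s \<Longrightarrow> dist r s < d \<Longrightarrow> \<forall>k\<in>K. F k r < 0"
      unfolding eventually_at by blast
    have "Inf S < s + d" using d(1) s_def by simp
    then obtain y where y: "y \<in> S" "y < s + d" using t0S bdd by (subst (asm) cInf_less_iff) auto
    have "s \<le> y" unfolding s_def using y(1) bdd by (rule cInf_lower)
    from y(1) obtain k where k: "k\<in>K" "0 \<le> F k y" "0 \<le> y" "y \<le> t0" by (auto simp: S_def)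
    show False
    proof (cases "y = s")
      case True then show ?thesis using neg k by auto
    next
      case False
      then have "\<forall>k\<in>K. F k y < 0" using d(2)[of y] k t0 \<open>s \<le> y\<close> y(2) by (auto simp: dist_real_def)
      then show ?thesis using k by auto
    qed
  qed
  then obtain k where k: "k\<in>K" "0 \<le> F k s" by blast
  have spos: "0 < s"
  proof (rule ccontr)
    assume "\<not> 0 < s" then have "s = 0" using s0 by simp
    then show False using init[OF k(1)] k(2) by simp
  qed
  have sT: "s < T" using st0 t0 by simp
  have atS: "at s within {0..} = at s" using spos by (intro at_within_interior) auto
  have C: "F j s \<le> 0" if "j\<in>K" for j
  proof -
    have "(F j has_real_derivative F' j s) (at s)" using der[OF that spos sT] atS by simp
    then have "isCont (F j) s" by (rule DERIV_isCont)
    then have "(F j \<longlongrightarrow> F j s) (at_left s)" by (simp add: isCont_def filterlim_at_split)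
    moreover have "eventually (\<lambda>r. F j r \<le> 0) (at_left s)"
      using eventually_at_left_real[OF spos]
      by (rule eventually_mono) (use A[OF that] in \<open>auto intro: less_imp_le\<close>)
    ultimately show ?thesis by (rule tendsto_upperbound) simp
  qed
  have Fks: "F k s = 0" using C[OF k(1)] k(2) by simp
  have neg: "F' k s < 0" using touch[OF k(1) spos sT _ Fks] C by blast
  have "(F k has_real_derivative F' k s) (at s)" using der[OF k(1) spos sT] atS by simp
  from DERIV_neg_dec_left[OF this neg] obtain d where d: "d>0" "\<And>h. h>0 \<Longrightarrow> h<d \<Longrightarrow> F k s < F k (s - h)" by blast
  define h where "h = min (d/2) (s/2)"
  have "F k s < F k (s - h)" using d spos by (intro d(2)) (auto simp: h_def)
  moreover have "F k (s - h) < 0" using k(1) spos d by (intro A) (auto simp: h_def)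
  ultimately show False using Fks by simp
qed

lemma barrier2:
  fixes F F' :: "'k \<Rightarrow> real \<Rightarrow> real"
  assumes fin: "finite K"
  and der: "\<And>k t. k\<in>K \<Longrightarrow> 0\<le>t \<Longrightarrow> (F k has_real_derivative F' k t) (at t within {0..})"
  and init: "\<And>k. k\<in>K \<Longrightarrow> F k 0 < 0"
  and touch: "\<And>k t. k\<in>K \<Longrightarrow> 0<t \<Longrightarrow> (\<forall>j\<in>K. F j t \<le> 0) \<Longrightarrow> F k t = 0 \<Longrightarrow> F' k t < 0"
  and k0: "k0\<in>K" and t0: "0\<le>t0"
  shows "F k0 t0 < 0"
proof (rule barrier[where K=K and F=F and F'=F' and T="t0+1"])
  show "finite K" by (rule fin)
next
  fix k assume k: "k\<in>K"
  have "continuous_on {0..} (F k)"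
    by (rule DERIV_continuous_on) (use der[OF k] in auto)
  then show "continuous_on {0..t0+1} (F k)" by (rule continuous_on_subset) auto
next
  fix k t assume "k\<in>K" "0<t" "t<t0+1"
  then show "(F k has_real_derivative F' k t) (at t within {0..})" using der by auto
next
  fix k assume "k\<in>K" then show "F k 0 < 0" by (rule init)
next
  fix k t assume "k\<in>K" "0<t" "t<t0+1" "\<forall>j\<in>K. F j t \<le> 0" "F k t = 0"
  then show "F' k t < 0" using touch by auto
qed (use k0 t0 in auto)

lemma hrd_inner:
  assumes "(f has_vector_derivative f') (at t within S)" "(g has_vector_derivative g') (at t within S)"
  shows "((\<lambda>t. inner (f t) (g t)) has_real_derivative (inner (f t) g' + inner f' (g t))) (at t within S)"
  unfolding has_real_derivative_iff_has_vector_derivative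
  by (rule bounded_bilinear.has_vector_derivative[OF bounded_bilinear_inner assms])

lemma finite_lower_bound:
  fixes f :: "nat \<Rightarrow> real"
  assumes "\<forall>i<N. f i > 0"
  shows "\<exists>l>0. \<forall>i<N. l \<le> f i"
proof (cases "N = 0")
  case True then show ?thesis by (intro exI[of _ 1]) auto
next
  case False
  define l where "l = Min (f ` {..<N})"
  have "l \<in> f ` {..<N}" unfolding l_def using False by (intro Min_in) auto
  then have "l > 0" using assms by auto
  moreover have "\<forall>i<N. l \<le> f i" unfolding l_def by auto
  ultimately show ?thesis by blast
qed

lemma finite_upper_bound:
  fixes f :: "nat \<Rightarrow> real"
  shows "\<exists>u\<ge>0. \<forall>i<N. f i \<le> u"
proof -
  define u where "u = (\<Sum>i<N. \<bar>f i\<bar>)"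
  have "f i \<le> u" if "i<N" for i
  proof -
    have "f i \<le> \<bar>f i\<bar>" by simp
    also have "\<dots> \<le> u" unfolding u_def using that by (intro member_le_sum) auto
    finally show ?thesis .
  qed
  moreover have "u \<ge> 0" unfolding u_def by (intro sum_nonneg) auto
  ultimately show ?thesis by blast
qed

locale csf =
  fixes N :: nat and m :: "nat \<Rightarrow> real" and \<sigma> p \<kappa> :: real
    and \<phi> :: "real \<Rightarrow> real"
    and x v :: "nat \<Rightarrow> real \<Rightarrow> 'a::euclidean_space" and \<theta> :: "nat \<Rightarrow> real \<Rightarrow> real"
    and e :: 'a
  assumes m_pos: "\<forall>i<N. m i > 0"
    and \<sigma>: "\<sigma> > 0" and p: "p > 0" and \<kappa>: "\<kappa> \<ge> 0"
    and \<phi>_pos: "\<forall>r\<ge>0. \<phi> r > 0"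
    and \<phi>_mono: "\<forall>r s. 0 \<le> r \<longrightarrow> r \<le> s \<longrightarrow> \<phi> s \<le> \<phi> r"
    and sol: "CSF_solution N m \<sigma> p \<kappa> \<phi> x v \<theta>"
    and \<theta>0: "\<forall>i<N. \<theta> i 0 > 0"
    and e1: "norm e = 1" and e0: "\<forall>i<N. inner e (v i 0) > 0"
begin

definition "cc i j t = m j * \<phi> (norm (x i t - x j t))"
definition "lam i t = \<sigma> * (\<theta> i t - norm (v i t) powr p)"
definition "Vd i t = (\<Sum>j<N. cc i j t *\<^sub>R (v j t - v i t)) + lam i t *\<^sub>R v i t"
definition "Td i t = \<kappa> * (\<Sum>j<N. cc i j t * (\<theta> j t - \<theta> i t))"
definition "w i t = inner e (v i t)"

lemma dv: "i<N \<Longrightarrow> 0 \<le> t \<Longrightarrow> (v i has_vector_derivative Vd i t) (at t within {0..})"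
  using sol unfolding CSF_solution_def Vd_def cc_def lam_def by auto

lemma dth: "i<N \<Longrightarrow> 0 \<le> t \<Longrightarrow> (\<theta> i has_real_derivative Td i t) (at t within {0..})"
  using sol unfolding CSF_solution_def Td_def cc_def by auto

lemma dx: "i<N \<Longrightarrow> 0 \<le> t \<Longrightarrow> (x i has_vector_derivative v i t) (at t within {0..})"
  using sol unfolding CSF_solution_def by auto

lemma cc_nonneg: "i<N \<Longrightarrow> j<N \<Longrightarrow> cc i j t \<ge> 0"
  unfolding cc_def using m_pos \<phi>_pos by (simp add: less_imp_le)

lemma Wd_eq: "inner e (Vd i t) = (\<Sum>j<N. cc i j t * (w j t - w i t)) + lam i t * w i t"
  unfolding Vd_def w_def by (simp add: inner_sum_right inner_diff_right inner_add_right)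

lemma dw: "i<N \<Longrightarrow> 0 \<le> t \<Longrightarrow> ((\<lambda>t. w i t) has_real_derivative
   (\<Sum>j<N. cc i j t * (w j t - w i t)) + lam i t * w i t) (at t within {0..})"
proof -
  assume "i<N" "0 \<le> t"
  from hrd_inner[OF has_vector_derivative_const dv[OF this], of e]
  have "((\<lambda>t. w i t) has_real_derivative inner e (Vd i t)) (at t within {0..})"
    by (simp add: w_def[abs_def])
  then show ?thesis by (simp only: Wd_eq)
qed

lemma theta_bounds: "\<exists>thl>0. \<exists>thh. \<forall>i<N. \<forall>t\<ge>0. thl < \<theta> i t \<and> \<theta> i t < thh"
proof -
  obtain l0 where l0: "l0 > 0" "\<forall>i<N. l0 \<le> \<theta> i 0" using finite_lower_bound[OF \<theta>0] by blast
  obtain u0 where u0: "\<forall>i<N. \<theta> i 0 \<le> u0" using finite_upper_bound[of N "\<lambda>i. \<theta> i 0"] by blast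
  have up: "\<theta> i t - (u0 + 2 - exp (-t)) < 0" if "i<N" "0 \<le> t" for i t
  proof (rule barrier2[where K="{..<N}" and F="\<lambda>i t. \<theta> i t - (u0 + 2 - exp (-t))"
        and F'="\<lambda>i t. Td i t - exp (-t)"])
    fix k and t :: real assume "k\<in>{..<N}" "0 \<le> t"
    then have d: "(\<theta> k has_real_derivative Td k t) (at t within {0..})" by (intro dth) auto
    show "((\<lambda>t. \<theta> k t - (u0 + 2 - exp (-t))) has_real_derivative Td k t - exp (-t)) (at t within {0..})"
      using d by (auto intro!: derivative_eq_intros)
  next
    fix k and t :: real assume k: "k\<in>{..<N}" and "0<t" and all: "\<forall>j\<in>{..<N}. \<theta> j t - (u0 + 2 - exp (-t)) \<le> 0"
      and eq: "\<theta> k t - (u0 + 2 - exp (-t)) = 0"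
    have "cc k j t * (\<theta> j t - \<theta> k t) \<le> 0" if "j \<in> {..<N}" for j
    proof (rule mult_nonneg_nonpos)
      show "0 \<le> cc k j t" using k that by (intro cc_nonneg) auto
      have "\<theta> j t - (u0 + 2 - exp (-t)) \<le> 0" using all that by blast
      then show "\<theta> j t - \<theta> k t \<le> 0" using eq by linarith
    qed
    then have "(\<Sum>j<N. cc k j t * (\<theta> j t - \<theta> k t)) \<le> 0" by (rule sum_nonpos)
    then have "Td k t \<le> 0" unfolding Td_def using \<kappa> by (rule mult_nonneg_nonpos[rotated])
    then show "Td k t - exp (-t) < 0" using exp_gt_zero[of "-t"] by linarith
  next
    fix k assume "k \<in> {..<N}" then have "\<theta> k 0 \<le> u0" using u0 by blast
    then show "\<theta> k 0 - (u0 + 2 - exp (-0)) < 0" by simp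
  qed (use that in auto)
  have lo: "l0 * (1 + exp (-t)) / 4 - \<theta> i t < 0" if "i<N" "0 \<le> t" for i t
  proof (rule barrier2[where K="{..<N}" and F="\<lambda>i t. l0 * (1 + exp (-t)) / 4 - \<theta> i t"
        and F'="\<lambda>i t. - l0 * exp (-t) / 4 - Td i t"])
    fix k and t :: real assume "k\<in>{..<N}" "0 \<le> t"
    then have d: "(\<theta> k has_real_derivative Td k t) (at t within {0..})" by (intro dth) auto
    show "((\<lambda>t. l0 * (1 + exp (-t)) / 4 - \<theta> k t) has_real_derivative - l0 * exp (-t) / 4 - Td k t) (at t within {0..})"
      using d by (auto intro!: derivative_eq_intros)
  next
    fix k and t :: real assume k: "k\<in>{..<N}" and "0<t" and all: "\<forall>j\<in>{..<N}. l0 * (1 + exp (-t)) / 4 - \<theta> j t \<le> 0"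
      and eq: "l0 * (1 + exp (-t)) / 4 - \<theta> k t = 0"
    have "cc k j t * (\<theta> j t - \<theta> k t) \<ge> 0" if "j \<in> {..<N}" for j
    proof (rule mult_nonneg_nonneg)
      show "0 \<le> cc k j t" using k that by (intro cc_nonneg) auto
      have "l0 * (1 + exp (-t)) / 4 - \<theta> j t \<le> 0" using all that by blast
      then show "0 \<le> \<theta> j t - \<theta> k t" using eq by linarith
    qed
    then have "(\<Sum>j<N. cc k j t * (\<theta> j t - \<theta> k t)) \<ge> 0" by (rule sum_nonneg)
    then have "Td k t \<ge> 0" unfolding Td_def using \<kappa> by (rule mult_nonneg_nonneg[rotated])
    moreover have "l0 * exp (-t) / 4 > 0" using l0 by simp
    ultimately show "- l0 * exp (-t) / 4 - Td k t < 0" by linarith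
  next
    fix k assume "k \<in> {..<N}" then have "l0 \<le> \<theta> k 0" using l0 by blast
    then show "l0 * (1 + exp (-0)) / 4 - \<theta> k 0 < 0" using l0 by simp
  qed (use that in auto)
  show ?thesis
  proof (intro exI conjI allI impI)
    show "l0/4 > 0" using l0 by simp
    fix i t assume it: "i<N" "(0::real) \<le> t"
    have "0 < l0 * exp (-t)" using l0 by simp
    then have "l0/4 \<le> l0 * (1 + exp (-t)) / 4" by (simp add: field_simps)
    then show "l0/4 < \<theta> i t" using lo[OF it] by linarith
    show "\<theta> i t < u0 + 2" using up[OF it] exp_gt_zero[of "-t"] by linarith
  qed
qed

end

context csf begin

lemma w_le_norm: "w i t \<le> norm (v i t)"
  unfolding w_def using norm_cauchy_schwarz[of e "v i t"] e1 by simp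

lemma w_upper: "\<exists>W>0. \<forall>i<N. \<forall>t\<ge>0. w i t < W"
proof -
  obtain thl thh where th: "thl > 0" "\<forall>i<N. \<forall>t\<ge>0. thl < \<theta> i t \<and> \<theta> i t < thh"
    using theta_bounds by blast
  obtain u0 where u0: "u0 \<ge> 0" "\<forall>i<N. w i 0 \<le> u0" using finite_upper_bound[of N "\<lambda>i. w i 0"] by blast
  define H where "H = max thh 1"
  define W where "W = u0 + H powr (1/p) + 1"
  have Hpos: "H > 0" unfolding H_def by simp
  have Wpos: "W > 0" unfolding W_def using u0 by (smt (verit) powr_ge_zero)
  have WH: "W powr p > H"
  proof -
    have "H powr (1/p) < W" unfolding W_def using u0 by simp
    then have "(H powr (1/p)) powr p < W powr p" using p by (intro powr_less_mono2) auto
    also have "(H powr (1/p)) powr p = H" using p Hpos by (simp add: powr_powr)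
    finally show ?thesis .
  qed
  have "w i t - W < 0" if "i<N" "0\<le>t" for i t
  proof (rule barrier2[where K="{..<N}" and F="\<lambda>i t. w i t - W"
        and F'="\<lambda>i t. (\<Sum>j<N. cc i j t * (w j t - w i t)) + lam i t * w i t"])
    fix k and t :: real assume "k\<in>{..<N}" "0 \<le> t"
    then show "((\<lambda>t. w k t - W) has_real_derivative (\<Sum>j<N. cc k j t * (w j t - w k t)) + lam k t * w k t) (at t within {0..})"
      using dw[of k t] by (auto intro!: derivative_eq_intros)
  next
    fix k and t :: real assume k: "k\<in>{..<N}" and t: "0<t" and all: "\<forall>j\<in>{..<N}. w j t - W \<le> 0"
      and eq: "w k t - W = 0"
    have s1: "(\<Sum>j<N. cc k j t * (w j t - w k t)) \<le> 0"
      using all eq k cc_nonneg by (intro sum_nonpos mult_nonneg_nonpos) auto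
    have "W \<le> norm (v k t)" using w_le_norm[of k t] eq by simp
    then have "W powr p \<le> norm (v k t) powr p" using p Wpos by (intro powr_mono2) auto
    moreover have "\<theta> k t < H"
    proof -
      have "\<theta> k t < thh" using th(2) k t by simp
      then show ?thesis unfolding H_def by linarith
    qed
    ultimately have "lam k t < 0" unfolding lam_def using WH \<sigma> by (simp add: mult_pos_neg)
    then have "lam k t * w k t < 0" using eq Wpos by (simp add: mult_neg_pos)
    then show "(\<Sum>j<N. cc k j t * (w j t - w k t)) + lam k t * w k t < 0" using s1 by simp
  next
    fix k assume "k \<in> {..<N}"
    then have "w k 0 \<le> u0" using u0 by blast
    moreover have "u0 < W" unfolding W_def using powr_ge_zero[of H "1/p"] by linarith
    ultimately show "w k 0 - W < 0" by linarith
  qed (use that in auto)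
  then show ?thesis using Wpos by (intro exI[of _ W]) auto
qed

lemma dnorm2: "i<N \<Longrightarrow> 0 \<le> t \<Longrightarrow> ((\<lambda>t. inner (v i t) (v i t)) has_real_derivative 2 * inner (v i t) (Vd i t)) (at t within {0..})"
proof -
  assume a: "i<N" "0 \<le> t"
  from hrd_inner[OF dv[OF a] dv[OF a]] show ?thesis by (simp add: inner_commute)
qed

lemma inner_Vd: "inner (v i t) (Vd i t) = (\<Sum>j<N. cc i j t * (inner (v i t) (v j t) - inner (v i t) (v i t))) + lam i t * inner (v i t) (v i t)"
  unfolding Vd_def by (simp add: inner_sum_right inner_diff_right inner_add_right)

lemma cone_key:
  fixes a b :: 'a and R wa wb :: real
  assumes "inner a a \<le> R * wa^2" "inner b b \<le> R * wb^2" "R \<ge> 0" "wa \<ge> 0" "wb \<ge> 0"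
  shows "inner a b \<le> R * wa * wb"
proof -
  have "inner a b \<le> norm a * norm b" by (rule norm_cauchy_schwarz)
  moreover have "(norm a * norm b)^2 \<le> (R * wa * wb)^2"
  proof -
    have "(norm a * norm b)^2 = inner a a * inner b b" by (simp add: power_mult_distrib dot_square_norm)
    also have "\<dots> \<le> (R * wa^2) * (R * wb^2)" using assms by (intro mult_mono) auto
    also have "\<dots> = (R * wa * wb)^2" by (simp add: power_mult_distrib power2_eq_square)
    finally show ?thesis .
  qed
  then have "norm a * norm b \<le> R * wa * wb"
    by (rule power2_le_imp_le) (simp add: assms(3-5))
  ultimately show ?thesis by linarith
qed

definition "Wd i t = (\<Sum>j<N. cc i j t * (w j t - w i t)) + lam i t * w i t"

lemma w_lower: "\<exists>L>0. \<forall>i<N. \<forall>t\<ge>0. L < w i t"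
proof -
  obtain thl thh where th: "thl > 0" "\<forall>i<N. \<forall>t\<ge>0. thl < \<theta> i t \<and> \<theta> i t < thh"
    using theta_bounds by blast
  have w0: "\<forall>i<N. w i 0 > 0" using e0 unfolding w_def by blast
  obtain wlo where wlo: "wlo > 0" "\<forall>i<N. wlo \<le> w i 0" using finite_lower_bound[OF w0] by blast
  obtain R0 where R0: "R0 \<ge> 0" "\<forall>i<N. inner (v i 0) (v i 0) / (w i 0)^2 \<le> R0"
    using finite_upper_bound[of N "\<lambda>i. inner (v i 0) (v i 0) / (w i 0)^2"] by blast
  have R0': "inner (v i 0) (v i 0) \<le> R0 * (w i 0)^2" if "i<N" for i
  proof -
    have "inner (v i 0) (v i 0) / (w i 0)^2 \<le> R0" using R0 that by blast
    moreover have "(w i 0)^2 > 0" using w0 that by (metis zero_less_power2 less_irrefl)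
    ultimately show ?thesis by (simp add: divide_le_eq)
  qed
  define L where "L = min (wlo/2) (thl powr (1/p) / sqrt (R0+2))"
  have Lpos: "L > 0" unfolding L_def using wlo th R0 by simp
  have L1: "sqrt (R0+2) * L \<le> thl powr (1/p)"
  proof -
    have "L \<le> thl powr (1/p) / sqrt (R0+2)" unfolding L_def by simp
    moreover have "sqrt (R0+2) > 0" using R0 by simp
    ultimately show ?thesis by (simp add: le_divide_eq mult.commute)
  qed
  define b where "b t = L * (1 + exp (-t)) / 2" for t :: real
  define Rf where "Rf t = R0 + 2 - exp (-t)" for t :: real
  define F where "F k t = (if snd k then b t - w (fst k) t
      else inner (v (fst k) t) (v (fst k) t) - Rf t * (w (fst k) t)^2)" for k :: "nat \<times> bool" and t
  define F' where "F' k t = (if snd k then - L * exp (-t) / 2 - Wd (fst k) t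
      else 2 * inner (v (fst k) t) (Vd (fst k) t) - (exp (-t) * (w (fst k) t)^2 + Rf t * (2 * w (fst k) t * Wd (fst k) t)))"
      for k :: "nat \<times> bool" and t
  have main: "F k t < 0" if "k \<in> {..<N} \<times> UNIV" "0 \<le> t" for k t
  proof (rule barrier2[where K="{..<N} \<times> UNIV" and F=F and F'=F'])
    show "finite ({..<N} \<times> (UNIV :: bool set))" by simp
  next
    fix k :: "nat \<times> bool" and t :: real assume k: "k \<in> {..<N} \<times> UNIV" and t: "0 \<le> t"
    obtain i c where kk: "k = (i, c)" by fastforce
    have i: "i < N" using k kk by auto
    have dW: "((\<lambda>t. w i t) has_real_derivative Wd i t) (at t within {0..})"
      unfolding Wd_def by (rule dw[OF i t])
    show "(F k has_real_derivative F' k t) (at t within {0..})"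
    proof (cases c)
      case True
      show ?thesis unfolding F_def F'_def kk b_def using True dW
        by (auto intro!: derivative_eq_intros)
    next
      case False
      show ?thesis unfolding F_def F'_def kk Rf_def using False dW dnorm2[OF i t]
        by (auto intro!: derivative_eq_intros)
    qed
  next
    fix k assume k: "k \<in> {..<N} \<times> (UNIV :: bool set)"
    obtain i c where kk: "k = (i, c)" by fastforce
    have i: "i < N" using k kk by auto
    show "F k 0 < 0"
    proof (cases c)
      case True
      have "wlo \<le> w i 0" using wlo i by blast
      moreover have "L \<le> wlo/2" unfolding L_def by (rule min.cobounded1)
      ultimately show ?thesis unfolding F_def kk b_def using True wlo by simp
    next
      case False
      have "inner (v i 0) (v i 0) \<le> R0 * (w i 0)^2" by (rule R0'[OF i])
      moreover have "(w i 0)^2 > 0" using w0 i by (metis zero_less_power2 less_irrefl)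
      moreover have "(R0+1)*(w i 0)^2 = R0*(w i 0)^2 + (w i 0)^2" by (simp add: distrib_right)
      ultimately have "inner (v i 0) (v i 0) < (R0 + 1) * (w i 0)^2" by linarith
      then show ?thesis unfolding F_def kk Rf_def using False by (simp add: add.commute)
    qed
  next
    fix k :: "nat \<times> bool" and t :: real assume k: "k \<in> {..<N} \<times> UNIV" and t: "0 < t"
      and all: "\<forall>j\<in>{..<N} \<times> UNIV. F j t \<le> 0" and eq: "F k t = 0"
    obtain i c where kk: "k = (i, c)" by fastforce
    have i: "i < N" using k kk by auto
    have "0 < 1 + exp (-t)" using exp_gt_zero[of "-t"] by linarith
    then have "0 < L * (1 + exp (-t))" by (rule mult_pos_pos[OF Lpos])
    then have bpos: "b t > 0" unfolding b_def by simp
    have "1 + exp (-t) \<le> 2" using t by simp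
    then have "L * (1 + exp (-t)) \<le> L * 2" by (rule mult_left_mono) (use Lpos in simp)
    then have bL: "b t \<le> L" unfolding b_def by simp
    have wj: "b t \<le> w j t" if "j < N" for j
      using all[rule_format, of "(j, True)"] that unfolding F_def by simp
    have cj: "inner (v j t) (v j t) \<le> Rf t * (w j t)^2" if "j < N" for j
      using all[rule_format, of "(j, False)"] that unfolding F_def by simp
    have "exp (-t) \<le> 1" using t by simp
    then have Rfpos: "Rf t \<ge> 0" "Rf t \<le> R0 + 2" unfolding Rf_def using R0(1) exp_gt_zero[of "-t"] by linarith+
    show "F' k t < 0"
    proof (cases c)
      case True
      have wi: "w i t = b t" using eq True unfolding F_def kk by simp
      have s1: "(\<Sum>j<N. cc i j t * (w j t - w i t)) \<ge> 0"
        using wi wj cc_nonneg i by (intro sum_nonneg mult_nonneg_nonneg) auto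
      have "(norm (v i t))^2 \<le> (sqrt (R0+2) * L)^2"
      proof -
        have "(norm (v i t))^2 = inner (v i t) (v i t)" by (simp add: dot_square_norm)
        also have "\<dots> \<le> Rf t * (w i t)^2" by (rule cj[OF i])
        also have "\<dots> \<le> (R0+2) * L^2"
          using Rfpos wi bpos bL by (intro mult_mono power_mono) auto
        also have "\<dots> = (sqrt (R0+2) * L)^2" using R0 by (simp add: power_mult_distrib)
        finally show ?thesis .
      qed
      then have "norm (v i t) \<le> sqrt (R0+2) * L"
        by (rule power2_le_imp_le) (use R0 Lpos in simp)
      then have "norm (v i t) \<le> thl powr (1/p)" using L1 by linarith
      then have "norm (v i t) powr p \<le> (thl powr (1/p)) powr p" using p by (intro powr_mono2) auto
      also have "\<dots> = thl" using p th by (simp add: powr_powr)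
      finally have "norm (v i t) powr p \<le> thl" .
      moreover have "thl < \<theta> i t" using th(2) i t by simp
      ultimately have "lam i t \<ge> 0" unfolding lam_def using \<sigma> by simp
      then have "lam i t * w i t \<ge> 0" using wi bpos by simp
      then have "Wd i t \<ge> 0" unfolding Wd_def using s1 by simp
      moreover have "L * exp (-t) / 2 > 0" using Lpos by simp
      ultimately show ?thesis unfolding F'_def kk using True by simp
    next
      case False
      have ci: "inner (v i t) (v i t) = Rf t * (w i t)^2" using eq False unfolding F_def kk by simp
      have wipos: "w i t > 0" using wj[OF i] bpos by linarith
      define r where "r = Rf t"
      define wi where "wi = w i t"
      have A: "inner (v i t) (Vd i t) = (\<Sum>j<N. cc i j t * (inner (v i t) (v j t) - r * wi^2)) + lam i t * (r * wi^2)"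
        using ci unfolding r_def wi_def by (simp add: inner_Vd)
      have B: "r * (wi * Wd i t) = (\<Sum>j<N. cc i j t * (r * wi * w j t - r * wi^2)) + lam i t * (r * wi^2)"
        unfolding Wd_def wi_def by (simp add: sum_distrib_left algebra_simps power2_eq_square)
      have C: "(\<Sum>j<N. cc i j t * (inner (v i t) (v j t) - r * wi^2)) - (\<Sum>j<N. cc i j t * (r * wi * w j t - r * wi^2))
          = (\<Sum>j<N. cc i j t * (inner (v i t) (v j t) - r * wi * w j t))"
        by (subst sum_subtractf[symmetric]) (simp add: algebra_simps)
      have D: "(\<Sum>j<N. cc i j t * (inner (v i t) (v j t) - r * wi * w j t)) \<le> 0"
      proof (rule sum_nonpos)
        fix j assume j: "j \<in> {..<N}"
        have "inner (v i t) (v j t) \<le> r * wi * w j t"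
          unfolding r_def wi_def
          by (rule cone_key) (use ci cj j Rfpos wipos wj bpos in \<open>auto intro: less_imp_le order_trans[OF less_imp_le[OF bpos]]\<close>)
        then show "cc i j t * (inner (v i t) (v j t) - r * wi * w j t) \<le> 0"
          using cc_nonneg[OF i, of j] j by (intro mult_nonneg_nonpos) auto
      qed
      have E: "exp (-t) * wi^2 > 0" using wipos unfolding wi_def by simp
      have "F' k t = 2 * inner (v i t) (Vd i t) - (exp (-t) * wi^2 + r * (2 * wi * Wd i t))"
        unfolding F'_def kk r_def wi_def using False by simp
      also have "\<dots> = 2 * ((\<Sum>j<N. cc i j t * (inner (v i t) (v j t) - r * wi^2)) - (\<Sum>j<N. cc i j t * (r * wi * w j t - r * wi^2))) - exp (-t) * wi^2"
        using A B by (simp add: algebra_simps)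
      also have "\<dots> = 2 * (\<Sum>j<N. cc i j t * (inner (v i t) (v j t) - r * wi * w j t)) - exp (-t) * wi^2"
        using C by simp
      finally show ?thesis using D E by linarith
    qed
  qed (use that in auto)
  show ?thesis
  proof (intro exI conjI allI impI)
    show "L/2 > 0" using Lpos by simp
    fix i and t :: real assume it: "i < N" "0 \<le> t"
    have "F (i, True) t < 0" using main it by auto
    then have "b t < w i t" unfolding F_def by simp
    moreover have "L/2 \<le> b t"
    proof -
      have "1 \<le> 1 + exp (-t)" using exp_gt_zero[of "-t"] by linarith
      then have "L * 1 \<le> L * (1 + exp (-t))" by (rule mult_left_mono) (use Lpos in simp)
      then show ?thesis unfolding b_def by simp
    qed
    ultimately show "L/2 < w i t" by linarith
  qed
qed
end

lemma alg_P:
  fixes v :: "nat \<Rightarrow> 'a::real_vector" and w c :: "nat \<Rightarrow> real"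
  assumes fin: "finite A" and wnz: "\<And>k. k\<in>A \<Longrightarrow> w k \<noteq> 0" and i: "i \<in> A"
  shows "(1 / w i) *\<^sub>R ((\<Sum>k\<in>A. c k *\<^sub>R (v k - v i)) + l *\<^sub>R v i)
        + (- ((\<Sum>k\<in>A. c k * (w k - w i)) + l * w i) / (w i)^2) *\<^sub>R v i
       = (\<Sum>k\<in>A. (c k * w k / w i) *\<^sub>R ((1 / w k) *\<^sub>R v k - (1 / w i) *\<^sub>R v i))"
proof -
  have wi: "w i \<noteq> 0" using wnz i by blast
  define S where "S = (\<Sum>k\<in>A. c k *\<^sub>R (v k - v i))"
  define T where "T = (\<Sum>k\<in>A. c k * (w k - w i))"
  have s1: "(1 / w i) *\<^sub>R (S + l *\<^sub>R v i) = (1 / w i) *\<^sub>R S + (l / w i) *\<^sub>R v i"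
    by (simp add: scaleR_add_right)
  have s2: "(- (T + l * w i) / (w i)^2) *\<^sub>R v i = - ((T / (w i)^2) *\<^sub>R v i) - (l / w i) *\<^sub>R v i"
  proof -
    have h: "- (T + l * w i) / (w i)^2 = - (T / (w i)^2) - l / w i"
      using wi by (simp add: field_simps power2_eq_square)
    show ?thesis by (subst h) (simp only: scaleR_diff_left scaleR_minus_left)
  qed
  have s3: "(1 / w i) *\<^sub>R S - (T / (w i)^2) *\<^sub>R v i
      = (\<Sum>k\<in>A. (1 / w i) *\<^sub>R (c k *\<^sub>R (v k - v i)) - (c k * (w k - w i) / (w i)^2) *\<^sub>R v i)"
    unfolding S_def T_def
    by (simp add: scaleR_sum_right scaleR_sum_left sum_subtractf sum_divide_distrib)
  have s4: "(1 / w i) *\<^sub>R (c k *\<^sub>R (v k - v i)) - (c k * (w k - w i) / (w i)^2) *\<^sub>R v i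
      = (c k * w k / w i) *\<^sub>R ((1 / w k) *\<^sub>R v k - (1 / w i) *\<^sub>R v i)" if k: "k\<in>A" for k
  proof -
    have wk: "w k \<noteq> 0" using wnz k by blast
    have "(1 / w i) *\<^sub>R (c k *\<^sub>R (v k - v i)) - (c k * (w k - w i) / (w i)^2) *\<^sub>R v i
        = (c k / w i) *\<^sub>R v k - (c k * w k / (w i)^2) *\<^sub>R v i"
    proof -
      have e1: "(1 / w i) *\<^sub>R (c k *\<^sub>R (v k - v i)) = (c k / w i) *\<^sub>R v k - (c k / w i) *\<^sub>R v i"
        by (simp add: scaleR_diff_right)
      have e2: "(c k * (w k - w i) / (w i)^2) = c k * w k / (w i)^2 - c k / w i"
        using wi by (simp add: field_simps power2_eq_square)
      show ?thesis unfolding e1 e2 by (simp add: scaleR_diff_left)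
    qed
    also have "\<dots> = (c k * w k / w i) *\<^sub>R ((1 / w k) *\<^sub>R v k - (1 / w i) *\<^sub>R v i)"
    proof -
      have h1: "(c k * w k / w i) * (1 / w k) = c k / w i" using wk by simp
      have h2: "(c k * w k / w i) * (1 / w i) = c k * w k / (w i)^2" by (simp add: power2_eq_square)
      show ?thesis by (simp only: scaleR_diff_right scaleR_scaleR h1 h2)
    qed
    finally show ?thesis .
  qed
  have "(1 / w i) *\<^sub>R (S + l *\<^sub>R v i) + (- (T + l * w i) / (w i)^2) *\<^sub>R v i
      = (1 / w i) *\<^sub>R S - (T / (w i)^2) *\<^sub>R v i"
    unfolding s1 s2 by (simp add: algebra_simps)
  also have "\<dots> = (\<Sum>k\<in>A. (c k * w k / w i) *\<^sub>R ((1 / w k) *\<^sub>R v k - (1 / w i) *\<^sub>R v i))"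
    unfolding s3 by (rule sum.cong[OF refl s4])
  finally show ?thesis unfolding S_def T_def .
qed

lemma cont_Max:
  fixes f :: "'i \<Rightarrow> 'b::topological_space \<Rightarrow> real"
  assumes "finite I" "I \<noteq> {}" "\<And>i. i\<in>I \<Longrightarrow> continuous_on S (f i)"
  shows "continuous_on S (\<lambda>s. Max ((\<lambda>i. f i s) ` I))"
  using assms
proof (induction I rule: finite_ne_induct)
  case (singleton i) then show ?case by simp
next
  case (insert i I)
  have eq: "(\<lambda>s. Max ((\<lambda>i. f i s) ` insert i I)) = (\<lambda>s. max (f i s) (Max ((\<lambda>i. f i s) ` I)))"
    using insert.hyps by (simp add: Max_insert)
  show ?case unfolding eq using insert by (intro continuous_on_max) auto
qed

lemma pair_key:
  fixes Q :: "nat \<Rightarrow> 'a::real_inner" and a :: "nat \<Rightarrow> real"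
  assumes fin: "finite A" and I: "I\<in>A" and J: "J\<in>A" and a: "\<And>k. k\<in>A \<Longrightarrow> a k \<ge> 0"
    and mx: "\<And>k. k\<in>A \<Longrightarrow> inner (Q k - Q J) (Q k - Q J) \<le> inner (Q I - Q J) (Q I - Q J)"
  shows "inner (Q I - Q J) (\<Sum>k\<in>A. a k *\<^sub>R (Q k - Q I)) \<le> - (a J * inner (Q I - Q J) (Q I - Q J))"
proof -
  define d where "d = Q I - Q J"
  have h: "inner d (Q k - Q I) \<le> 0" if k: "k\<in>A" for k
  proof -
    define u where "u = Q k - Q I"
    have e: "Q k - Q J = u + d" unfolding u_def d_def by simp
    have "inner (Q k - Q J) (Q k - Q J) \<le> inner d d" using mx[OF k] unfolding d_def .
    then have "inner (u + d) (u + d) \<le> inner d d" by (simp only: e)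
    then have "inner u u + 2 * inner u d \<le> 0" by (simp add: inner_add_left inner_add_right inner_commute)
    moreover have "inner u u \<ge> 0" by simp
    ultimately have "inner u d \<le> 0" by linarith
    then show ?thesis unfolding u_def by (simp add: inner_commute)
  qed
  have "inner d (\<Sum>k\<in>A. a k *\<^sub>R (Q k - Q I)) = (\<Sum>k\<in>A. a k * inner d (Q k - Q I))"
    by (simp add: inner_sum_right)
  also have "\<dots> = a J * inner d (Q J - Q I) + (\<Sum>k\<in>A-{J}. a k * inner d (Q k - Q I))"
    by (rule sum.remove[OF fin J])
  also have "\<dots> \<le> a J * inner d (Q J - Q I)"
  proof -
    have "(\<Sum>k\<in>A-{J}. a k * inner d (Q k - Q I)) \<le> 0"
      using a h by (intro sum_nonpos mult_nonneg_nonpos) auto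
    then show ?thesis by simp
  qed
  also have "\<dots> = - (a J * inner d d)"
  proof -
    have "Q J - Q I = - d" unfolding d_def by simp
    then show ?thesis by simp
  qed
  finally show ?thesis unfolding d_def .
qed

lemma angle_bound:
  fixes a b e :: "'a::euclidean_space" and wa wb :: real
  assumes e1: "norm e = 1" and wa: "wa > 0" "inner e a = wa" and wb: "wb > 0" "inner e b = wb"
  shows "1 - cos (vec_angle a b) \<le> inner ((1/wa) *\<^sub>R a - (1/wb) *\<^sub>R b) ((1/wa) *\<^sub>R a - (1/wb) *\<^sub>R b) / 2"
proof -
  define A where "A = (1/wa) *\<^sub>R a"
  define B where "B = (1/wb) *\<^sub>R b"
  have eA: "inner e A = 1" unfolding A_def using wa by (simp add: inner_scaleR_right)
  have eB: "inner e B = 1" unfolding B_def using wb by (simp add: inner_scaleR_right)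
  define x where "x = norm A"
  define y where "y = norm B"
  have x1: "x \<ge> 1" unfolding x_def using norm_cauchy_schwarz[of e A] eA e1 by simp
  have y1: "y \<ge> 1" unfolding y_def using norm_cauchy_schwarz[of e B] eB e1 by simp
  have aA: "a = wa *\<^sub>R A" unfolding A_def using wa by simp
  have bB: "b = wb *\<^sub>R B" unfolding B_def using wb by simp
  define c where "c = inner A B / (x * y)"
  have xy: "x * y > 0" using x1 y1 by simp
  have ABc: "inner A B = c * x * y" unfolding c_def using x1 y1 by (simp add: field_simps)
  have c1: "c \<le> 1"
  proof -
    have "inner A B \<le> x * y" unfolding x_def y_def by (rule norm_cauchy_schwarz)
    then show ?thesis unfolding c_def using xy by simp
  qed
  have cm1: "-1 \<le> c"
  proof -
    have "- inner A B \<le> x * y" using norm_cauchy_schwarz[of "-A" B] unfolding x_def y_def by simp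
    then show ?thesis unfolding c_def using xy by (simp add: field_simps)
  qed
  have ang: "cos (vec_angle a b) = c"
  proof -
    have "inner a b / (norm a * norm b) = c"
      unfolding aA bB c_def x_def y_def using wa wb by (simp add: inner_scaleR_left inner_scaleR_right)
    then show ?thesis unfolding vec_angle_def using c1 cm1 by (simp add: cos_arccos)
  qed
  have AA: "inner A A = x^2" unfolding x_def by (simp add: dot_square_norm)
  have BB: "inner B B = y^2" unfolding y_def by (simp add: dot_square_norm)
  have AB0: "inner (A - B) (A - B) = inner A A + inner B B - 2 * inner A B"
    by (simp add: inner_diff_left inner_diff_right inner_commute)
  have AB: "inner (A - B) (A - B) = x^2 + y^2 - 2 * (c * x * y)"
    using AB0 unfolding AA BB ABc .
  have xy1: "x * y \<ge> 1 * 1" by (rule mult_mono) (use x1 y1 in auto)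
  have k2: "(1 - c) * (x * y - 1) \<ge> 0" using c1 xy1 by (intro mult_nonneg_nonneg) auto
  have eq: "x^2 + y^2 - 2 * (c * x * y) - 2 * (1 - c) = (x - y)^2 + 2 * ((1 - c) * (x * y - 1))"
    by (simp add: algebra_simps power2_eq_square)
  have "(0::real) \<le> (x - y)^2" by simp
  then have "2 * (1 - c) \<le> x^2 + y^2 - 2 * (c * x * y)" using eq k2 by linarith
  then have "1 - c \<le> inner (A - B) (A - B) / 2" unfolding AB by simp
  then show ?thesis unfolding ang A_def B_def .
qed

context csf begin

definition "P i t = (1 / w i t) *\<^sub>R v i t"
definition "Pd i t = (\<Sum>k<N. (cc i k t * w k t / w i t) *\<^sub>R (P k t - P i t))"

lemma dP:
  assumes wpos: "\<forall>i<N. \<forall>t\<ge>0. w i t > 0" and i: "i<N" and t: "0\<le>t"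
  shows "((\<lambda>t. P i t) has_vector_derivative Pd i t) (at t within {0..})"
proof -
  have dW: "((\<lambda>t. w i t) has_real_derivative Wd i t) (at t within {0..})"
    unfolding Wd_def by (rule dw[OF i t])
  have wi: "w i t \<noteq> 0" using wpos i t by (metis less_irrefl)
  have dinv: "((\<lambda>t. 1 / w i t) has_real_derivative (- Wd i t / (w i t)^2)) (at t within {0..})"
    using dW wi by (auto intro!: derivative_eq_intros simp: power2_eq_square field_simps)
  have "((\<lambda>t. (1 / w i t) *\<^sub>R v i t) has_vector_derivative
      ((1 / w i t) *\<^sub>R Vd i t + (- Wd i t / (w i t)^2) *\<^sub>R v i t)) (at t within {0..})"
    by (rule has_vector_derivative_scaleR[OF dinv dv[OF i t]])
  moreover have "(1 / w i t) *\<^sub>R Vd i t + (- Wd i t / (w i t)^2) *\<^sub>R v i t = Pd i t"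
  proof -
    have wnz: "\<And>k. k \<in> {..<N} \<Longrightarrow> w k t \<noteq> 0" using wpos t by (metis lessThan_iff less_irrefl)
    show ?thesis
      unfolding Vd_def Wd_def Pd_def P_def
      using alg_P[of "{..<N}" "\<lambda>k. w k t" i "\<lambda>k. cc i k t" "\<lambda>k. v k t" "lam i t", OF _ wnz] i
      by simp
  qed
  ultimately show ?thesis unfolding P_def[abs_def] by simp
qed

lemma diam_eq: "diam N x s = Max ((\<lambda>ij. norm (x (fst ij) s - x (snd ij) s)) ` ({..<N} \<times> {..<N}))"
proof -
  have "{norm (x i s - x j s) | i j. i < N \<and> j < N} = (\<lambda>ij. norm (x (fst ij) s - x (snd ij) s)) ` ({..<N} \<times> {..<N})"
    by force
  then show ?thesis unfolding diam_def by simp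
qed

lemma diam_ge: "i<N \<Longrightarrow> j<N \<Longrightarrow> norm (x i s - x j s) \<le> diam N x s"
  unfolding diam_eq by (rule Max_ge) force+

lemma x_cont: "i<N \<Longrightarrow> continuous_on {0..} (x i)"
  unfolding continuous_on_eq_continuous_within
  using dx by (blast intro: has_vector_derivative_continuous)

lemma diam_cont: assumes "N \<ge> 1" shows "continuous_on {0..} (\<lambda>s. diam N x s)"
  unfolding diam_eq
proof (rule cont_Max)
  have "(0,0) \<in> {..<N} \<times> {..<N}" using assms by simp
  then show "{..<N} \<times> {..<N} \<noteq> {}" by blast
  fix ij :: "nat \<times> nat" assume "ij \<in> {..<N} \<times> {..<N}"
  then show "continuous_on {0..} (\<lambda>s. norm (x (fst ij) s - x (snd ij) s))"
    using x_cont by (auto intro!: continuous_intros)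
qed simp


lemma lin_aux: "(f::real) = 2*(s1+s2) + q \<Longrightarrow> s1 \<le> -p1 \<Longrightarrow> s2 \<le> -p2 \<Longrightarrow> q \<le> p1 \<Longrightarrow> q \<le> p2 \<Longrightarrow> 0 < q \<Longrightarrow> f < 0"
  by (smt (verit))

lemma P_decay:
  assumes N1: "N \<ge> 1" and \<phi>c: "continuous_on UNIV \<phi>"
  shows "\<exists>C0>0. \<exists>\<beta>>0. \<forall>t\<ge>0. \<forall>I<N. \<forall>J<N.
     inner (P I t - P J t) (P I t - P J t) < C0 * exp (- \<beta> * integral {0..t} (\<lambda>s. \<phi> (diam N x s)))"
proof -
  obtain Lw where Lw: "Lw > 0" "\<forall>i<N. \<forall>t\<ge>0. Lw < w i t" using w_lower by blast
  obtain W where W: "W > 0" "\<forall>i<N. \<forall>t\<ge>0. w i t < W" using w_upper by blast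
  have wpos: "\<forall>i<N. \<forall>t\<ge>0. w i t > 0" using Lw by (meson less_trans)
  obtain m0 where m0: "m0 > 0" "\<forall>i<N. m0 \<le> m i" using finite_lower_bound[OF m_pos] by blast
  define D0 where "D0 = (\<Sum>I<N. \<Sum>J<N. inner (P I 0 - P J 0) (P I 0 - P J 0))"
  have D0: "inner (P I 0 - P J 0) (P I 0 - P J 0) \<le> D0" if "I<N" "J<N" for I J
  proof -
    have "inner (P I 0 - P J 0) (P I 0 - P J 0) \<le> (\<Sum>J<N. inner (P I 0 - P J 0) (P I 0 - P J 0))"
      using that by (intro member_le_sum) auto
    also have "\<dots> \<le> D0" unfolding D0_def using that by (intro member_le_sum sum_nonneg) auto
    finally show ?thesis .
  qed
  define C0 where "C0 = D0 + 1"
  define \<beta> where "\<beta> = m0 * Lw / W"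
  have \<beta>pos: "\<beta> > 0" unfolding \<beta>_def using m0 Lw W by simp
  define Jf where "Jf t = integral {0..t} (\<lambda>s. \<phi> (diam N x s))" for t
  define G where "G t = C0 * exp (- \<beta> * Jf t)" for t
  have D0nn: "D0 \<ge> 0" unfolding D0_def by (intro sum_nonneg) auto
  have C0pos: "C0 > 0" unfolding C0_def using D0nn by simp
  have Gpos: "G t > 0" for t unfolding G_def using C0pos by simp
  have \<phi>dc: "continuous_on {0..} (\<lambda>s. \<phi> (diam N x s))"
    by (rule continuous_on_compose2[OF \<phi>c diam_cont[OF N1]]) auto
  have Pc: "continuous_on {0..} (P i)" if "i<N" for i
    unfolding continuous_on_eq_continuous_within
    using dP[OF wpos that] by (auto intro: has_vector_derivative_continuous simp: P_def[abs_def])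
  have bound: "inner (P I t0 - P J t0) (P I t0 - P J t0) < G t0" if t0: "0 \<le> t0" and IJ: "I<N" "J<N" for t0 I J
  proof -
    define T where "T = t0 + 1"
    define F where "F k t = inner (P (fst k) t - P (snd k) t) (P (fst k) t - P (snd k) t) - G t"
      for k :: "nat \<times> nat" and t
    define F' where "F' k t = 2 * inner (P (fst k) t - P (snd k) t) (Pd (fst k) t - Pd (snd k) t)
         + \<beta> * \<phi> (diam N x t) * G t" for k :: "nat \<times> nat" and t
    have \<phi>dT: "continuous_on {0..T} (\<lambda>s. \<phi> (diam N x s))"
      by (rule continuous_on_subset[OF \<phi>dc]) auto
    have Jc: "continuous_on {0..T} Jf"
      unfolding Jf_def[abs_def]
      by (rule indefinite_integral_continuous_1[OF integrable_continuous_real[OF \<phi>dT]])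
    have dJ: "(Jf has_real_derivative \<phi> (diam N x t)) (at t within {0..})" if "0 < t" "t < T" for t
    proof -
      have "(Jf has_vector_derivative \<phi> (diam N x t)) (at t within {0..T})"
        unfolding Jf_def[abs_def] by (rule integral_has_vector_derivative[OF \<phi>dT]) (use that in auto)
      moreover have "at t within {0..T} = at t" using that by (intro at_within_interior) auto
      ultimately have "(Jf has_vector_derivative \<phi> (diam N x t)) (at t)" by simp
      then have "(Jf has_real_derivative \<phi> (diam N x t)) (at t)"
        by (simp add: has_real_derivative_iff_has_vector_derivative)
      then show ?thesis by (rule has_field_derivative_at_within)
    qed
    have "F (I, J) t0 < 0"
    proof (rule barrier[where K="{..<N} \<times> {..<N}" and F=F and F'=F' and T=T])
      show "finite ({..<N} \<times> {..<N})" by simp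
    next
      fix k :: "nat \<times> nat" assume k: "k \<in> {..<N} \<times> {..<N}"
      have "continuous_on {0..T} (P (fst k))" "continuous_on {0..T} (P (snd k))"
        using Pc k by (auto intro: continuous_on_subset[of "{0..}" _ "{0..T}"])
      then show "continuous_on {0..T} (F k)"
        unfolding F_def[abs_def] G_def[abs_def] using Jc by (auto intro!: continuous_intros)
    next
      fix k :: "nat \<times> nat" and t :: real assume k: "k \<in> {..<N} \<times> {..<N}" and t: "0 < t" "t < T"
      have d1: "((\<lambda>t. P (fst k) t - P (snd k) t) has_vector_derivative (Pd (fst k) t - Pd (snd k) t)) (at t within {0..})"
        using k t by (intro has_vector_derivative_diff dP[OF wpos]) auto
      have d2: "((\<lambda>t. inner (P (fst k) t - P (snd k) t) (P (fst k) t - P (snd k) t)) has_real_derivative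
           2 * inner (P (fst k) t - P (snd k) t) (Pd (fst k) t - Pd (snd k) t)) (at t within {0..})"
        using hrd_inner[OF d1 d1] by (simp add: inner_commute)
      have d3: "(G has_real_derivative (- \<beta> * \<phi> (diam N x t) * G t)) (at t within {0..})"
        unfolding G_def[abs_def] using dJ[OF t]
        by (auto intro!: derivative_eq_intros simp: algebra_simps)
      show "(F k has_real_derivative F' k t) (at t within {0..})"
        unfolding F_def[abs_def] F'_def using d2 d3
        by (auto intro!: derivative_eq_intros)
    next
      fix k :: "nat \<times> nat" assume k: "k \<in> {..<N} \<times> {..<N}"
      have "Jf 0 = 0" unfolding Jf_def by simp
      then have "G 0 = C0" unfolding G_def by simp
      moreover have "inner (P (fst k) 0 - P (snd k) 0) (P (fst k) 0 - P (snd k) 0) \<le> D0"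
        using k D0 by auto
      ultimately show "F k 0 < 0" unfolding F_def C0_def by simp
    next
      fix k :: "nat \<times> nat" and t :: real assume k: "k \<in> {..<N} \<times> {..<N}" and t: "0 < t" "t < T"
        and all: "\<forall>j\<in>{..<N} \<times> {..<N}. F j t \<le> 0" and eq: "F k t = 0"
      obtain a b where ab: "k = (a, b)" by fastforce
      have a: "a < N" and b: "b < N" using k ab by auto
      define g where "g = G t"
      define \<phi>D where "\<phi>D = \<phi> (diam N x t)"
      define Q where "Q k = P k t" for k
      define d where "d = Q a - Q b"
      have dd: "inner d d = g" using eq unfolding F_def ab d_def Q_def g_def by simp
      have allQ: "inner (Q i - Q j) (Q i - Q j) \<le> g" if "i<N" "j<N" for i j
        using all[rule_format, of "(i,j)"] that unfolding F_def Q_def g_def by simp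
      define A where "A i k = cc i k t * w k t / w i t" for i k
      have Anonneg: "A i k \<ge> 0" if "i<N" "k<N" for i k
      proof -
        have "w k t > 0" "w i t > 0" using wpos that t by auto
        then show ?thesis unfolding A_def using cc_nonneg[OF that, of t]
          by (intro divide_nonneg_pos mult_nonneg_nonneg) auto
      qed
      have \<phi>Dpos: "\<phi>D > 0" unfolding \<phi>D_def using \<phi>_pos diam_ge[OF a a, of t] by (meson norm_ge_zero order_trans)
      define \<alpha> where "\<alpha> = m0 * \<phi>D * (Lw / W)"
      have \<alpha>pos: "\<alpha> > 0" unfolding \<alpha>_def using m0 \<phi>Dpos Lw W by simp
      have Alow: "A i k \<ge> \<alpha>" if i: "i<N" and k: "k<N" for i k
      proof -
        have "m0 \<le> m k" using m0 k by blast
        moreover have "\<phi>D \<le> \<phi> (norm (x i t - x k t))"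
          unfolding \<phi>D_def using \<phi>_mono diam_ge[OF i k, of t] by simp
        ultimately have c1: "m0 * \<phi>D \<le> cc i k t" unfolding cc_def
          using m0 \<phi>Dpos by (intro mult_mono) auto
        have wi: "0 < w i t" "w i t < W" using wpos W i t by auto
        have wk: "Lw < w k t" using Lw k t by auto
        have "Lw / W \<le> w k t / W" using wk W by (simp add: divide_right_mono)
        also have "\<dots> \<le> w k t / w i t" using wi wk Lw by (intro divide_left_mono) auto
        finally have c2: "Lw / W \<le> w k t / w i t" .
        have "\<alpha> \<le> cc i k t * (w k t / w i t)" unfolding \<alpha>_def
          using c1 c2 m0 \<phi>Dpos Lw W cc_nonneg[OF i k, of t] by (intro mult_mono) auto
        then show ?thesis unfolding A_def by simp
      qed
      have PdQ: "Pd i t = (\<Sum>k\<in>{..<N}. A i k *\<^sub>R (Q k - Q i))" for i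
        unfolding Pd_def A_def Q_def by simp
      have X1: "inner (Q a - Q b) (\<Sum>k\<in>{..<N}. A a k *\<^sub>R (Q k - Q a)) \<le> - (A a b * inner (Q a - Q b) (Q a - Q b))"
      proof (rule pair_key)
        fix k assume "k \<in> {..<N}"
        then show "inner (Q k - Q b) (Q k - Q b) \<le> inner (Q a - Q b) (Q a - Q b)"
          using allQ[of k b] b dd unfolding d_def by simp
      qed (use a b Anonneg in auto)
      have X2: "inner (Q b - Q a) (\<Sum>k\<in>{..<N}. A b k *\<^sub>R (Q k - Q b)) \<le> - (A b a * inner (Q b - Q a) (Q b - Q a))"
      proof (rule pair_key)
        have "inner (Q b - Q a) (Q b - Q a) = inner d d" unfolding d_def
          by (simp add: inner_diff_left inner_diff_right inner_commute)
        then show "inner (Q k - Q a) (Q k - Q a) \<le> inner (Q b - Q a) (Q b - Q a)" if "k \<in> {..<N}" for k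
          using allQ[of k a] a that dd by simp
      qed (use a b Anonneg in auto)
      have ba: "inner (Q b - Q a) (Q b - Q a) = g" using dd unfolding d_def
        by (simp add: inner_diff_left inner_diff_right inner_commute)
      have split: "inner d (Pd a t - Pd b t) = inner (Q a - Q b) (\<Sum>k\<in>{..<N}. A a k *\<^sub>R (Q k - Q a))
          + inner (Q b - Q a) (\<Sum>k\<in>{..<N}. A b k *\<^sub>R (Q k - Q b))"
        unfolding PdQ d_def by (simp add: inner_diff_left inner_diff_right)
      have gpos: "g > 0" unfolding g_def by (rule Gpos)
      define S1 where "S1 = inner (Q a - Q b) (\<Sum>k\<in>{..<N}. A a k *\<^sub>R (Q k - Q a))"
      define S2 where "S2 = inner (Q b - Q a) (\<Sum>k\<in>{..<N}. A b k *\<^sub>R (Q k - Q b))"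
      have X1': "S1 \<le> - (A a b * g)" unfolding S1_def using X1[unfolded dd[unfolded d_def]] .
      have X2': "S2 \<le> - (A b a * g)" unfolding S2_def using X2[unfolded ba] .
      have m1: "\<alpha> * g \<le> A a b * g" using Alow[OF a b] gpos by (intro mult_right_mono) auto
      have m2: "\<alpha> * g \<le> A b a * g" using Alow[OF b a] gpos by (intro mult_right_mono) auto
      have bp: "\<beta> * \<phi>D = \<alpha>" unfolding \<beta>_def \<alpha>_def by simp
      have ag: "\<alpha> * g > 0" using \<alpha>pos gpos by simp
      have "F' k t = 2 * inner d (Pd a t - Pd b t) + \<beta> * \<phi>D * g"
        unfolding F'_def ab d_def Q_def \<phi>D_def g_def by simp
      also have "\<dots> = 2 * (S1 + S2) + \<alpha> * g" unfolding split S1_def S2_def bp ..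
      finally have "F' k t = 2 * (S1 + S2) + \<alpha> * g" .
      then show "F' k t < 0" by (rule lin_aux[OF _ X1' X2' m1 m2 ag])
    qed (use t0 IJ in \<open>auto simp: T_def\<close>)
    then show ?thesis unfolding F_def by simp
  qed
  show ?thesis
    by (intro exI[of _ C0] exI[of _ \<beta>] conjI C0pos \<beta>pos allI impI)
       (use bound in \<open>auto simp: G_def Jf_def\<close>)
qed

end

theorem mainTheorem9:
  fixes N :: nat and m :: "nat \<Rightarrow> real" and \<sigma> p \<kappa> :: real
    and \<phi> :: "real \<Rightarrow> real"
    and x v :: "nat \<Rightarrow> real \<Rightarrow> 'a::euclidean_space" and \<theta> :: "nat \<Rightarrow> real \<Rightarrow> real"
  assumes N: "N \<ge> 1"
    and m_pos: "\<forall>i<N. m i > 0"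
    and \<sigma>: "\<sigma> > 0" and p: "p > 0" and \<kappa>: "\<kappa> \<ge> 0"
    and \<phi>_smooth: "\<forall>k. \<forall>r. ((deriv ^^ k) \<phi>) differentiable (at r)"
    and \<phi>_pos: "\<forall>r\<ge>0. \<phi> r > 0"
    and \<phi>_mono: "\<forall>r s. 0 \<le> r \<longrightarrow> r \<le> s \<longrightarrow> \<phi> s \<le> \<phi> r"
    and sol: "CSF_solution N m \<sigma> p \<kappa> \<phi> x v \<theta>"
    and \<theta>0: "\<forall>i<N. \<theta> i 0 > 0"
    and sect: "sectorial N v"
  shows "\<exists>C c. C > 0 \<and> c > 0 \<and>
           (\<forall>t\<ge>0. 1 - cos (max_angle N v t)
              \<le> C * exp (- c * (\<Sum>i<N. m i) * integral {0..t} (\<lambda>s. \<phi> (diam N x s))))"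
proof -
  obtain e where e: "norm e = 1" "\<forall>i<N. inner e (v i 0) > 0" using sect unfolding sectorial_def by blast
  interpret csf N m \<sigma> p \<kappa> \<phi> x v \<theta> e
    unfolding csf_def using m_pos \<sigma> p \<kappa> \<phi>_pos \<phi>_mono sol \<theta>0 e by blast
  have \<phi>c: "continuous_on UNIV \<phi>"
  proof -
    have "\<phi> differentiable (at r)" for r using \<phi>_smooth[rule_format, of 0 r] by simp
    then show ?thesis
      by (intro continuous_at_imp_continuous_on ballI differentiable_imp_continuous_within) auto
  qed
  obtain C0 \<beta> where CB: "C0 > 0" "\<beta> > 0"
    "\<forall>t\<ge>0. \<forall>I<N. \<forall>J<N. inner (P I t - P J t) (P I t - P J t)
        < C0 * exp (- \<beta> * integral {0..t} (\<lambda>s. \<phi> (diam N x s)))"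
    using P_decay[OF N \<phi>c] by blast
  obtain Lw where Lw: "Lw > 0" "\<forall>i<N. \<forall>t\<ge>0. Lw < w i t" using w_lower by blast
  define M where "M = (\<Sum>i<N. m i)"
  have Mpos: "M > 0" unfolding M_def
  proof (rule sum_pos)
    have "0 \<in> {..<N}" using N by simp
    then show "{..<N} \<noteq> {}" by blast
  qed (use m_pos in auto)
  have c1: "C0/2 > 0" using CB by simp
  have c2: "\<beta>/M > 0" using CB Mpos by simp
  have main: "1 - cos (max_angle N v t)
        \<le> C0 / 2 * exp (- (\<beta> / M) * (\<Sum>i<N. m i) * integral {0..t} (\<lambda>s. \<phi> (diam N x s)))"
    if t: "0 \<le> t" for t
  proof -
    define S where "S = {vec_angle (v i t) (v j t) | i j. i < N \<and> j < N}"
    have Seq: "S = (\<lambda>ij. vec_angle (v (fst ij) t) (v (snd ij) t)) ` ({..<N} \<times> {..<N})"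
      unfolding S_def by force
    have Sfin: "finite S" unfolding Seq by simp
    have "(0,0) \<in> {..<N} \<times> {..<N}" using N by simp
    then have Sne: "S \<noteq> {}" unfolding Seq by blast
    have "max_angle N v t \<in> S" unfolding max_angle_def S_def[symmetric] by (rule Max_in[OF Sfin Sne])
    then obtain I J where IJ: "I<N" "J<N" "max_angle N v t = vec_angle (v I t) (v J t)"
      unfolding S_def by blast
    have wI: "w I t > 0" using Lw IJ t by (meson less_trans)
    have wJ: "w J t > 0" using Lw IJ t by (meson less_trans)
    have "1 - cos (max_angle N v t) \<le> inner (P I t - P J t) (P I t - P J t) / 2"
      unfolding IJ(3) P_def
      by (rule angle_bound[OF e(1) wI _ wJ]) (simp_all add: w_def)
    also have "\<dots> < C0 * exp (- \<beta> * integral {0..t} (\<lambda>s. \<phi> (diam N x s))) / 2"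
      using CB(3) t IJ by (simp add: divide_strict_right_mono)
    also have "\<dots> = C0 / 2 * exp (- (\<beta> / M) * (\<Sum>i<N. m i) * integral {0..t} (\<lambda>s. \<phi> (diam N x s)))"
      using Mpos unfolding M_def[symmetric] by simp
    finally show ?thesis by simp
  qed
  show ?thesis using c1 c2 main by blast
qed

end
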